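(* Let $G=(V,E)$ be a finite, simple, connected graph which is effective Bonnet Myers sharp with curvature $K$, i.e. $K=\min_{u\sim v}\kappa(u,v)>0$ and $\operatorname{diam}_{\operatorname{eff}}(G)=\frac{\max_v\operatorname{Deg}(v)}{K}$. Let $x\sim y$. Then every $x'\in V_x^y$ has exactly one neighbor in $V_y^x$, and exactly $K-2$ neighbors of $x'$ lie in $V^{xy}$.
   Context: $d$ is the combinatorial distance, $\operatorname{Deg}$ the degree, $\operatorname{diam}_{\operatorname{eff}}(G)=\frac{1}{|V|^2}\sum_{x,y}d(x,y)$. Laplacian $\Delta f(x)=\sum_{y\sim x}(f(y)-f(x))$. Ollivier curvature of an edge: $\kappa(x,y)=\inf\{\Delta f(x)-\Delta f(y): f(y)-f(x)=1,\ \max_{u\sim v}|f(u)-f(v)|=1\}$. For adjacent $x\sim y$: $V_x^y=\{v: d(v,x)<d(v,y)\}$, $V_y^x=\{v:d(v,y)<d(v,x)\}$, $V^{xy}=\{v:d(v,x)=d(v,y)\}$. *)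

theory Defs
  imports Complex_Main
begin

definition simple_graph :: "'a set \<Rightarrow> ('a \<Rightarrow> 'a \<Rightarrow> bool) \<Rightarrow> bool" where
  "simple_graph V E \<longleftrightarrow> finite V \<and> V \<noteq> {} \<and>
     (\<forall>u v. E u v \<longrightarrow> u \<in> V \<and> v \<in> V) \<and>
     (\<forall>u v. E u v \<longrightarrow> E v u) \<and> (\<forall>u. \<not> E u u)"

definition walk :: "'a set \<Rightarrow> ('a \<Rightarrow> 'a \<Rightarrow> bool) \<Rightarrow> 'a \<Rightarrow> 'a \<Rightarrow> nat \<Rightarrow> bool" where
  "walk V E x y n \<longleftrightarrow> (\<exists>p :: nat \<Rightarrow> 'a. p 0 = x \<and> p n = y \<and> (\<forall>i\<le>n. p i \<in> V) \<and>
     (\<forall>i<n. E (p i) (p (Suc i))))"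

definition connected_graph :: "'a set \<Rightarrow> ('a \<Rightarrow> 'a \<Rightarrow> bool) \<Rightarrow> bool" where
  "connected_graph V E \<longleftrightarrow> (\<forall>x\<in>V. \<forall>y\<in>V. \<exists>n. walk V E x y n)"

definition gdist :: "'a set \<Rightarrow> ('a \<Rightarrow> 'a \<Rightarrow> bool) \<Rightarrow> 'a \<Rightarrow> 'a \<Rightarrow> nat" where
  "gdist V E x y = (LEAST n. walk V E x y n)"

definition Deg :: "'a set \<Rightarrow> ('a \<Rightarrow> 'a \<Rightarrow> bool) \<Rightarrow> 'a \<Rightarrow> nat" where
  "Deg V E v = card {u \<in> V. E v u}"

definition diam_eff :: "'a set \<Rightarrow> ('a \<Rightarrow> 'a \<Rightarrow> bool) \<Rightarrow> real" where
  "diam_eff V E = (\<Sum>x\<in>V. \<Sum>y\<in>V. real (gdist V E x y)) / (real (card V))^2"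

definition laplacian :: "'a set \<Rightarrow> ('a \<Rightarrow> 'a \<Rightarrow> bool) \<Rightarrow> ('a \<Rightarrow> real) \<Rightarrow> 'a \<Rightarrow> real" where
  "laplacian V E f x = (\<Sum>y\<in>{y \<in> V. E x y}. f y - f x)"

text \<open>Ollivier curvature of an edge (Muench--Wojciechowski limit-free formulation).\<close>
definition ollivier :: "'a set \<Rightarrow> ('a \<Rightarrow> 'a \<Rightarrow> bool) \<Rightarrow> 'a \<Rightarrow> 'a \<Rightarrow> real" where
  "ollivier V E x y = Inf {laplacian V E f x - laplacian V E f y | f.
      f y - f x = 1 \<and> Max {\<bar>f u - f v\<bar> | u v. u \<in> V \<and> v \<in> V \<and> E u v} = 1}"

definition min_curv :: "'a set \<Rightarrow> ('a \<Rightarrow> 'a \<Rightarrow> bool) \<Rightarrow> real" where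
  "min_curv V E = Min {ollivier V E u v | u v. E u v}"

end

theory Submission
  imports Defs
begin


locale G =
  fixes V :: "'a set" and E :: "'a \<Rightarrow> 'a \<Rightarrow> bool"
  assumes sg: "simple_graph V E" and conn: "connected_graph V E"
begin

lemma finV: "finite V" using sg by (simp add: simple_graph_def)
lemma EV: "E u v \<Longrightarrow> u \<in> V \<and> v \<in> V" using sg by (simp add: simple_graph_def)
lemma Esym: "E u v \<Longrightarrow> E v u" using sg by (simp add: simple_graph_def)
lemma Eirr: "\<not> E u u" using sg by (simp add: simple_graph_def)

lemma walk_0: "walk V E x y 0 \<longleftrightarrow> x = y \<and> x \<in> V"
  unfolding walk_def by (auto intro!: exI[of _ "\<lambda>_. x"])

lemma walk_Suc: "walk V E x y (Suc n) \<longleftrightarrow> (\<exists>w. E x w \<and> walk V E w y n)"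
proof
  assume "walk V E x y (Suc n)"
  then obtain p where p: "p 0 = x" "p (Suc n) = y" "\<forall>i\<le>Suc n. p i \<in> V"
    "\<forall>i<Suc n. E (p i) (p (Suc i))" unfolding walk_def by blast
  have "E x (p 1)" using p by auto
  moreover have "walk V E (p 1) y n" unfolding walk_def
    by (rule exI[of _ "\<lambda>i. p (Suc i)"]) (use p in auto)
  ultimately show "\<exists>w. E x w \<and> walk V E w y n" by blast
next
  assume "\<exists>w. E x w \<and> walk V E w y n"
  then obtain w q where w: "E x w" and q: "q 0 = w" "q n = y" "\<forall>i\<le>n. q i \<in> V"
    "\<forall>i<n. E (q i) (q (Suc i))" unfolding walk_def by blast
  let ?p = "\<lambda>i. if i = 0 then x else q (i - 1)"
  have "?p 0 = x" "?p (Suc n) = y" using q by auto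
  moreover have "\<forall>i\<le>Suc n. ?p i \<in> V"
  proof (intro allI impI)
    fix i assume "i \<le> Suc n"
    then show "?p i \<in> V" using q EV[OF w] by (cases i) auto
  qed
  moreover have "\<forall>i<Suc n. E (?p i) (?p (Suc i))"
  proof (intro allI impI)
    fix i assume "i < Suc n"
    then show "E (?p i) (?p (Suc i))" using q w by (cases i) auto
  qed
  ultimately show "walk V E x y (Suc n)" unfolding walk_def by (intro exI[of _ ?p]) blast
qed

lemma walk_trans: "walk V E x y n \<Longrightarrow> walk V E y z k \<Longrightarrow> walk V E x z (n + k)"
proof (induction n arbitrary: x)
  case 0 then show ?case by (simp add: walk_0)
next
  case (Suc n) then show ?case by (auto simp: walk_Suc)
qed

lemma walk_sym: "walk V E x y n \<Longrightarrow> walk V E y x n"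
proof -
  assume "walk V E x y n"
  then obtain p where p: "p 0 = x" "p n = y" "\<forall>i\<le>n. p i \<in> V"
    "\<forall>i<n. E (p i) (p (Suc i))" unfolding walk_def by blast
  have "\<forall>i<n. E (p (n - i)) (p (n - Suc i))"
  proof (intro allI impI)
    fix i assume i: "i < n"
    then have "E (p (n - Suc i)) (p (Suc (n - Suc i)))" using p by auto
    moreover have "Suc (n - Suc i) = n - i" using i by auto
    ultimately show "E (p (n - i)) (p (n - Suc i))" using Esym by auto
  qed
  then show ?thesis unfolding walk_def using p
    by (intro exI[of _ "\<lambda>i. p (n - i)"]) auto
qed

lemma walk_ex: "x \<in> V \<Longrightarrow> y \<in> V \<Longrightarrow> \<exists>n. walk V E x y n"
  using conn unfolding connected_graph_def by blast

lemma gd_walk: "x \<in> V \<Longrightarrow> y \<in> V \<Longrightarrow> walk V E x y (gdist V E x y)"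
  unfolding gdist_def using walk_ex by (rule LeastI_ex)

lemma gd_le: "walk V E x y n \<Longrightarrow> gdist V E x y \<le> n"
  unfolding gdist_def by (rule Least_le)

lemma gd_sym: "x \<in> V \<Longrightarrow> y \<in> V \<Longrightarrow> gdist V E x y = gdist V E y x"
  using gd_le[OF walk_sym[OF gd_walk[of x y]]] gd_le[OF walk_sym[OF gd_walk[of y x]]] by auto

lemma gd_0: "x \<in> V \<Longrightarrow> y \<in> V \<Longrightarrow> gdist V E x y = 0 \<longleftrightarrow> x = y"
proof
  assume "x \<in> V" "y \<in> V" "gdist V E x y = 0"
  then show "x = y" using gd_walk[of x y] by (simp add: walk_0)
next
  assume "x = y" "x \<in> V" then show "gdist V E x y = 0" using gd_le[of x y 0] by (simp add: walk_0)
qed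

lemma gd_tri: "x \<in> V \<Longrightarrow> y \<in> V \<Longrightarrow> z \<in> V \<Longrightarrow> gdist V E x z \<le> gdist V E x y + gdist V E y z"
  using gd_le[OF walk_trans[OF gd_walk[of x y] gd_walk[of y z]]] by blast

lemma gd_edge: "E a b \<Longrightarrow> gdist V E a b = 1"
proof -
  assume e: "E a b"
  have "walk V E a b 1" using e EV[OF e] by (simp add: walk_Suc walk_0)
  then have "gdist V E a b \<le> 1" by (rule gd_le)
  moreover have "a \<noteq> b" using e Eirr by auto
  ultimately show ?thesis using gd_0 EV[OF e] by fastforce
qed

lemma gd_lip: "E a b \<Longrightarrow> p \<in> V \<Longrightarrow> gdist V E a p \<le> gdist V E b p + 1"
  using gd_tri[of a b p] gd_edge[of a b] EV[of a b] by simp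

lemma gd_lip_abs: "E a b \<Longrightarrow> p \<in> V \<Longrightarrow> \<bar>real (gdist V E a p) - real (gdist V E b p)\<bar> \<le> 1"
  using gd_lip[of a b p] gd_lip[of b a p] Esym[of a b] by auto

lemma gd_pred: "u \<in> V \<Longrightarrow> p \<in> V \<Longrightarrow> gdist V E u p = Suc k \<Longrightarrow> \<exists>w. E u w \<and> gdist V E w p = k"
proof -
  assume u: "u \<in> V" and p: "p \<in> V" and d: "gdist V E u p = Suc k"
  then have "walk V E u p (Suc k)" using gd_walk by metis
  then obtain w where w: "E u w" "walk V E w p k" by (auto simp: walk_Suc)
  have "gdist V E w p \<le> k" using w gd_le by blast
  moreover have "Suc k \<le> gdist V E w p + 1" using gd_lip[OF w(1) p] d by simp
  ultimately show ?thesis using w by auto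
qed

end


context G begin

lemma lap_sum_zero: "(\<Sum>x\<in>V. laplacian V E f x) = 0"
proof -
  let ?h = "\<lambda>x y. if E x y then f y - f x else 0"
  have 1: "laplacian V E f x = (\<Sum>y\<in>V. ?h x y)" for x
    unfolding laplacian_def using finV by (simp add: sum.inter_filter[symmetric])
  have "(\<Sum>x\<in>V. \<Sum>y\<in>V. ?h x y) = (\<Sum>y\<in>V. \<Sum>x\<in>V. ?h x y)" by (rule sum.swap)
  also have "\<dots> = (\<Sum>y\<in>V. \<Sum>x\<in>V. - ?h y x)"
    by (intro sum.cong refl) (auto dest: Esym)
  also have "\<dots> = - (\<Sum>y\<in>V. \<Sum>x\<in>V. ?h y x)" by (simp add: sum_negf)
  finally have "(\<Sum>x\<in>V. \<Sum>y\<in>V. ?h x y) = 0" by simp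
  then show ?thesis using 1 by simp
qed

lemma finite_edge_img: "finite {F u v | u v. u \<in> V \<and> v \<in> V \<and> E u v}"
proof -
  have "{F u v | u v. u \<in> V \<and> v \<in> V \<and> E u v} \<subseteq> (\<lambda>(u,v). F u v) ` (V \<times> V)" by auto
  then show ?thesis using finV finite_subset by blast
qed

lemma lap_lower:
  assumes "\<forall>a b. E a b \<longrightarrow> \<bar>g a - g b\<bar> \<le> 1"
  shows "laplacian V E g u \<ge> - real (card V)" "laplacian V E g u \<le> real (card V)"
proof -
  have c: "card {w\<in>V. E u w} \<le> card V" using finV by (intro card_mono) auto
  have "(\<Sum>w\<in>{w\<in>V. E u w}. g w - g u) \<ge> (\<Sum>w\<in>{w\<in>V. E u w}. -1)"
    using assms by (intro sum_mono) force
  then show "laplacian V E g u \<ge> - real (card V)" unfolding laplacian_def using c by simp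
  have "(\<Sum>w\<in>{w\<in>V. E u w}. g w - g u) \<le> (\<Sum>w\<in>{w\<in>V. E u w}. 1)"
    using assms by (intro sum_mono) force
  then show "laplacian V E g u \<le> real (card V)" unfolding laplacian_def using c by simp
qed

lemma curv_edge:
  assumes "E u v" and lip: "\<forall>a b. E a b \<longrightarrow> \<bar>f a - f b\<bar> \<le> 1" and "f v - f u = 1"
  shows "laplacian V E f u - laplacian V E f v \<ge> min_curv V E"
proof -
  have "{ollivier V E u v | u v. E u v} \<subseteq> (\<lambda>(u,v). ollivier V E u v) ` (V \<times> V)"
    using EV by auto
  then have fin: "finite {ollivier V E u v | u v. E u v}" using finV finite_subset by blast
  have K: "min_curv V E \<le> ollivier V E u v" unfolding min_curv_def
    using fin assms(1) by (intro Min_le) auto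
  have "Max {\<bar>f a - f b\<bar> | a b. a \<in> V \<and> b \<in> V \<and> E a b} = 1"
  proof (rule Max_eqI)
    show "finite {\<bar>f a - f b\<bar> | a b. a \<in> V \<and> b \<in> V \<and> E a b}" by (rule finite_edge_img)
    show "\<And>z. z \<in> {\<bar>f a - f b\<bar> | a b. a \<in> V \<and> b \<in> V \<and> E a b} \<Longrightarrow> z \<le> 1" using lip by auto
    have "\<bar>f u - f v\<bar> = 1" using assms(3) by simp
    then show "1 \<in> {\<bar>f a - f b\<bar> | a b. a \<in> V \<and> b \<in> V \<and> E a b}" using EV[OF assms(1)] assms(1)
      by force
  qed
  then have mem: "laplacian V E f u - laplacian V E f v \<in> {laplacian V E f u - laplacian V E f v | f.
      f v - f u = 1 \<and> Max {\<bar>f a - f b\<bar> | a b. a \<in> V \<and> b \<in> V \<and> E a b} = 1}"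
    using assms(3) by blast
  have bdd: "bdd_below {laplacian V E f u - laplacian V E f v | f.
      f v - f u = 1 \<and> Max {\<bar>f a - f b\<bar> | a b. a \<in> V \<and> b \<in> V \<and> E a b} = 1}"
  proof (rule bdd_belowI[of _ "- 2 * real (card V)"])
    fix z assume "z \<in> {laplacian V E f u - laplacian V E f v | f.
      f v - f u = 1 \<and> Max {\<bar>f a - f b\<bar> | a b. a \<in> V \<and> b \<in> V \<and> E a b} = 1}"
    then obtain g where z: "z = laplacian V E g u - laplacian V E g v"
      and M: "Max {\<bar>g a - g b\<bar> | a b. a \<in> V \<and> b \<in> V \<and> E a b} = 1" by blast
    have "\<forall>a b. E a b \<longrightarrow> \<bar>g a - g b\<bar> \<le> 1"
    proof (intro allI impI)
      fix a b assume e: "E a b"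
      have "\<bar>g a - g b\<bar> \<in> {\<bar>g a - g b\<bar> | a b. a \<in> V \<and> b \<in> V \<and> E a b}" using e EV[OF e] by blast
      then show "\<bar>g a - g b\<bar> \<le> 1" using M Max_ge[OF finite_edge_img[of "\<lambda>a b. \<bar>g a - g b\<bar>"]] by simp
    qed
    from lap_lower[OF this, of u] lap_lower[OF this, of v] show "- 2 * real (card V) \<le> z" unfolding z
      by linarith
  qed
  have "ollivier V E u v \<le> laplacian V E f u - laplacian V E f v"
    unfolding ollivier_def by (rule cInf_lower[OF mem bdd])
  with K show ?thesis by simp
qed

end


context G begin

lemma dist_lip: "p \<in> V \<Longrightarrow> \<forall>a b. E a b \<longrightarrow> \<bar>real (gdist V E a p) - real (gdist V E b p)\<bar> \<le> 1"
  using gd_lip_abs by blast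

lemma lap_dist_self: "u \<in> V \<Longrightarrow> laplacian V E (\<lambda>z. real (gdist V E z u)) u = real (Deg V E u)"
proof -
  assume u: "u \<in> V"
  have "laplacian V E (\<lambda>z. real (gdist V E z u)) u = (\<Sum>w\<in>{w\<in>V. E u w}. 1)"
    unfolding laplacian_def
  proof (intro sum.cong refl)
    fix w assume "w \<in> {w\<in>V. E u w}"
    then have "gdist V E w u = 1" using gd_edge Esym by auto
    moreover have "gdist V E u u = 0" using gd_0 u by auto
    ultimately show "real (gdist V E w u) - real (gdist V E u u) = 1" by simp
  qed
  then show ?thesis unfolding Deg_def by simp
qed

lemma curv_dist:
  assumes u: "u \<in> V"
  shows "\<forall>p\<in>V. gdist V E p u = n \<longrightarrow>
     real (Deg V E u) - laplacian V E (\<lambda>z. real (gdist V E z u)) p \<ge> min_curv V E * real n"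
proof (induction n)
  case 0
  show ?case using lap_dist_self[OF u] gd_0 u by auto
next
  case (Suc k)
  show ?case
  proof (intro ballI impI)
    fix p assume p: "p \<in> V" "gdist V E p u = Suc k"
    then obtain w where w: "E p w" "gdist V E w u = k" using gd_pred u by blast
    have wV: "w \<in> V" using EV w(1) by auto
    have IH: "real (Deg V E u) - laplacian V E (\<lambda>z. real (gdist V E z u)) w \<ge> min_curv V E * real k"
      using Suc wV w(2) by blast
    have "laplacian V E (\<lambda>z. real (gdist V E z u)) w - laplacian V E (\<lambda>z. real (gdist V E z u)) p
        \<ge> min_curv V E"
      by (rule curv_edge[OF Esym[OF w(1)] dist_lip[OF u]]) (use p w in simp)
    with IH show "real (Deg V E u) - laplacian V E (\<lambda>z. real (gdist V E z u)) p \<ge> min_curv V E * real (Suc k)"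
      by (simp add: algebra_simps)
  qed
qed

lemma curv_dist': "u \<in> V \<Longrightarrow> p \<in> V \<Longrightarrow>
     real (Deg V E u) - laplacian V E (\<lambda>z. real (gdist V E z u)) p \<ge> min_curv V E * real (gdist V E p u)"
  using curv_dist by blast

end


context G begin

lemma sharp:
  assumes K: "K = min_curv V E" "K > 0" "diam_eff V E = real (Max (Deg V E ` V)) / K"
  shows "\<forall>u\<in>V. \<forall>p\<in>V. laplacian V E (\<lambda>z. real (gdist V E z u)) p = real (Deg V E u) - K * real (gdist V E p u)"
    and "\<forall>u\<in>V. Deg V E u = Max (Deg V E ` V)"
proof -
  define N where "N = real (card V)"
  define Dm where "Dm = real (Max (Deg V E ` V))"
  define t where "t u p = real (Deg V E u) - laplacian V E (\<lambda>z. real (gdist V E z u)) p - K * real (gdist V E p u)" for u p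
  have t0: "u \<in> V \<Longrightarrow> p \<in> V \<Longrightarrow> t u p \<ge> 0" for u p
    using curv_dist'[of u p] K(1) unfolding t_def by simp
  have Npos: "N > 0" unfolding N_def using sg finV by (simp add: simple_graph_def card_gt_0_iff)
  have Dle: "u \<in> V \<Longrightarrow> real (Deg V E u) \<le> Dm" for u
    unfolding Dm_def using finV by simp
  have T1: "(\<Sum>p\<in>V. t u p) = N * real (Deg V E u) - K * (\<Sum>p\<in>V. real (gdist V E p u))" for u
    unfolding t_def N_def
    by (simp add: sum_subtractf lap_sum_zero sum_distrib_left)
  have T2: "(\<Sum>u\<in>V. \<Sum>p\<in>V. real (gdist V E p u)) = (\<Sum>x\<in>V. \<Sum>y\<in>V. real (gdist V E x y))"
    by (rule sum.swap)
  have "(\<Sum>x\<in>V. \<Sum>y\<in>V. real (gdist V E x y)) / N^2 = Dm / K"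
    using K(3) unfolding diam_eff_def N_def Dm_def by simp
  then have T3: "K * (\<Sum>x\<in>V. \<Sum>y\<in>V. real (gdist V E x y)) = N^2 * Dm"
    using Npos K(2) by (simp add: field_simps)
  have "(\<Sum>u\<in>V. \<Sum>p\<in>V. t u p) + (\<Sum>u\<in>V. N * (Dm - real (Deg V E u)))
      = (\<Sum>u\<in>V. N * Dm) - K * (\<Sum>u\<in>V. \<Sum>p\<in>V. real (gdist V E p u))"
    unfolding T1 by (simp add: sum_subtractf sum_distrib_left sum.distrib algebra_simps)
  also have "\<dots> = 0" unfolding T2 T3 by (simp add: N_def power2_eq_square)
  finally have S0: "(\<Sum>u\<in>V. \<Sum>p\<in>V. t u p) + (\<Sum>u\<in>V. N * (Dm - real (Deg V E u))) = 0" .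
  have A: "(\<Sum>u\<in>V. \<Sum>p\<in>V. t u p) \<ge> 0" using t0 by (intro sum_nonneg) auto
  have B: "(\<Sum>u\<in>V. N * (Dm - real (Deg V E u))) \<ge> 0" using Dle Npos by (intro sum_nonneg) auto
  have A0: "(\<Sum>u\<in>V. \<Sum>p\<in>V. t u p) = 0" and B0: "(\<Sum>u\<in>V. N * (Dm - real (Deg V E u))) = 0"
    using A B S0 by linarith+
  have "\<forall>u\<in>V. (\<Sum>p\<in>V. t u p) = 0"
    using A0 finV t0 by (subst (asm) sum_nonneg_eq_0_iff) (auto intro: sum_nonneg)
  then have "\<forall>u\<in>V. \<forall>p\<in>V. t u p = 0"
    using finV t0 by (auto simp: sum_nonneg_eq_0_iff)
  then show "\<forall>u\<in>V. \<forall>p\<in>V. laplacian V E (\<lambda>z. real (gdist V E z u)) p = real (Deg V E u) - K * real (gdist V E p u)"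
  proof (intro ballI)
    fix u p assume "\<forall>u\<in>V. \<forall>p\<in>V. t u p = 0" "u \<in> V" "p \<in> V"
    then have "t u p = 0" by blast
    then show "laplacian V E (\<lambda>z. real (gdist V E z u)) p = real (Deg V E u) - K * real (gdist V E p u)"
      unfolding t_def by linarith
  qed
  have "\<forall>u\<in>V. N * (Dm - real (Deg V E u)) = 0"
    using B0 finV Dle Npos by (subst (asm) sum_nonneg_eq_0_iff) auto
  then show "\<forall>u\<in>V. Deg V E u = Max (Deg V E ` V)" using Npos unfolding Dm_def by auto
qed

end


context G begin

lemma xy_lip: "E x y \<Longrightarrow> w \<in> V \<Longrightarrow> gdist V E w y \<le> gdist V E w x + 1 \<and> gdist V E w x \<le> gdist V E w y + 1"
  using gd_tri[of w x y] gd_tri[of w y x] gd_edge[of x y] gd_edge[of y x] Esym[of x y] EV[of x y] by auto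

lemma sum_ind: "(\<Sum>w\<in>{w\<in>V. E p w}. if P w then 1 else 0) = real (card {w\<in>V. E p w \<and> P w})"
proof -
  have "(\<Sum>w\<in>{w\<in>V. E p w}. if P w then (1::real) else 0) = (\<Sum>w\<in>{w\<in>{w\<in>V. E p w}. P w}. 1)"
    using finV by (intro sum.inter_filter[symmetric]) simp
  also have "{w\<in>{w\<in>V. E p w}. P w} = {w\<in>V. E p w \<and> P w}" by auto
  finally show ?thesis by simp
qed

lemma lap_diff: "laplacian V E (\<lambda>z. f z - g z) p = laplacian V E f p - laplacian V E g p"
  unfolding laplacian_def by (simp add: sum_subtractf[symmetric] algebra_simps)

context
  fixes x y assumes xy: "E x y"
begin

definition aa where "aa p = card {w\<in>V. E p w \<and> gdist V E w y < gdist V E w x}"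
definition bb where "bb p = card {w\<in>V. E p w \<and> gdist V E w x = gdist V E w y}"

lemma lap_delta:
  assumes p: "p \<in> V" "gdist V E p x < gdist V E p y"
  shows "laplacian V E (\<lambda>z. real (min (gdist V E z x) (gdist V E z y))) p
       = laplacian V E (\<lambda>z. real (gdist V E z x)) p - real (aa p)"
proof -
  have "laplacian V E (\<lambda>z. real (min (gdist V E z x) (gdist V E z y))) p
      = (\<Sum>w\<in>{w\<in>V. E p w}. (real (gdist V E w x) - real (gdist V E p x))
            - (if gdist V E w y < gdist V E w x then 1 else 0))"
    unfolding laplacian_def
  proof (intro sum.cong refl)
    fix w assume "w \<in> {w\<in>V. E p w}"
    then have "gdist V E w y \<le> gdist V E w x + 1 \<and> gdist V E w x \<le> gdist V E w y + 1"
      using xy_lip[OF xy] by auto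
    then show "real (min (gdist V E w x) (gdist V E w y)) - real (min (gdist V E p x) (gdist V E p y))
      = (real (gdist V E w x) - real (gdist V E p x)) - (if gdist V E w y < gdist V E w x then 1 else 0)"
      using p by (auto simp: min_def)
  qed
  also have "\<dots> = laplacian V E (\<lambda>z. real (gdist V E z x)) p - real (aa p)"
    unfolding laplacian_def aa_def sum_subtractf sum_ind by simp
  finally show ?thesis .
qed

lemma lap_psi:
  assumes p: "p \<in> V" "gdist V E p x < gdist V E p y"
  shows "laplacian V E (\<lambda>z. real (max (gdist V E z x) (gdist V E z y))) p
       = laplacian V E (\<lambda>z. real (gdist V E z y)) p + real (aa p)"
proof -
  have "laplacian V E (\<lambda>z. real (max (gdist V E z x) (gdist V E z y))) p
      = (\<Sum>w\<in>{w\<in>V. E p w}. (real (gdist V E w y) - real (gdist V E p y))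
            + (if gdist V E w y < gdist V E w x then 1 else 0))"
    unfolding laplacian_def
  proof (intro sum.cong refl)
    fix w assume "w \<in> {w\<in>V. E p w}"
    then have "gdist V E w y \<le> gdist V E w x + 1 \<and> gdist V E w x \<le> gdist V E w y + 1"
      using xy_lip[OF xy] by auto
    then show "real (max (gdist V E w x) (gdist V E w y)) - real (max (gdist V E p x) (gdist V E p y))
      = (real (gdist V E w y) - real (gdist V E p y)) + (if gdist V E w y < gdist V E w x then 1 else 0)"
      using p by (auto simp: max_def)
  qed
  also have "\<dots> = laplacian V E (\<lambda>z. real (gdist V E z y)) p + real (aa p)"
    unfolding laplacian_def aa_def sum.distrib sum_ind by simp
  finally show ?thesis .
qed

lemma lap_g:
  assumes p: "p \<in> V" "gdist V E p x < gdist V E p y"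
  shows "laplacian V E (\<lambda>z. real (gdist V E z y) - real (gdist V E z x)) p
       = - (2 * real (aa p) + real (bb p))"
proof -
  have "laplacian V E (\<lambda>z. real (gdist V E z y) - real (gdist V E z x)) p
      = (\<Sum>w\<in>{w\<in>V. E p w}. - (2 * (if gdist V E w y < gdist V E w x then 1 else 0)
            + (if gdist V E w x = gdist V E w y then 1 else 0)))"
    unfolding laplacian_def
  proof (intro sum.cong refl)
    fix w assume "w \<in> {w\<in>V. E p w}"
    then have "gdist V E w y \<le> gdist V E w x + 1 \<and> gdist V E w x \<le> gdist V E w y + 1"
      using xy_lip[OF xy] by auto
    moreover have "gdist V E p y \<le> gdist V E p x + 1" using xy_lip[OF xy p(1)] by auto
    ultimately show "real (gdist V E w y) - real (gdist V E w x) - (real (gdist V E p y) - real (gdist V E p x))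
      = - (2 * (if gdist V E w y < gdist V E w x then 1 else 0)
            + (if gdist V E w x = gdist V E w y then 1 else 0))"
      using p by auto
  qed
  also have "\<dots> = - (2 * real (aa p) + real (bb p))"
    unfolding aa_def bb_def sum_negf sum.distrib sum_distrib_left[symmetric] sum_ind by simp
  finally show ?thesis .
qed


lemma min_lip: "\<forall>a b. E a b \<longrightarrow> \<bar>real (min (gdist V E a x) (gdist V E a y)) - real (min (gdist V E b x) (gdist V E b y))\<bar> \<le> 1"
proof (intro allI impI)
  fix a b assume e: "E a b"
  have xV: "x \<in> V" "y \<in> V" using EV xy by auto
  show "\<bar>real (min (gdist V E a x) (gdist V E a y)) - real (min (gdist V E b x) (gdist V E b y))\<bar> \<le> 1"
    using gd_lip[OF e xV(1)] gd_lip[OF Esym[OF e] xV(1)] gd_lip[OF e xV(2)] gd_lip[OF Esym[OF e] xV(2)]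
    by (auto simp: min_def)
qed

lemma max_lip: "\<forall>a b. E a b \<longrightarrow> \<bar>real (max (gdist V E a x) (gdist V E a y)) - real (max (gdist V E b x) (gdist V E b y))\<bar> \<le> 1"
proof (intro allI impI)
  fix a b assume e: "E a b"
  have xV: "x \<in> V" "y \<in> V" using EV xy by auto
  show "\<bar>real (max (gdist V E a x) (gdist V E a y)) - real (max (gdist V E b x) (gdist V E b y))\<bar> \<le> 1"
    using gd_lip[OF e xV(1)] gd_lip[OF Esym[OF e] xV(1)] gd_lip[OF e xV(2)] gd_lip[OF Esym[OF e] xV(2)]
    by (auto simp: max_def)
qed

lemma aa_one:
  assumes K: "K = min_curv V E" "K > 0" "diam_eff V E = real (Max (Deg V E ` V)) / K"
  shows "\<forall>p\<in>V. gdist V E p x = k \<longrightarrow> gdist V E p x < gdist V E p y \<longrightarrow> aa p = 1"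
proof (induction k)
  have xV: "x \<in> V" "y \<in> V" using EV xy by auto
  case 0
  show ?case
  proof (intro ballI impI)
    fix p assume p: "p \<in> V" "gdist V E p x = 0"
    then have px: "p = x" using gd_0 xV by auto
    have "{w\<in>V. E x w \<and> gdist V E w y < gdist V E w x} = {y}"
    proof
      show "{w\<in>V. E x w \<and> gdist V E w y < gdist V E w x} \<subseteq> {y}"
      proof
        fix w assume w: "w \<in> {w\<in>V. E x w \<and> gdist V E w y < gdist V E w x}"
        then have "gdist V E w x = 1" using gd_edge Esym by auto
        then have "gdist V E w y = 0" using w by auto
        then show "w \<in> {y}" using gd_0 w xV by auto
      qed
      show "{y} \<subseteq> {w\<in>V. E x w \<and> gdist V E w y < gdist V E w x}"
        using xV xy gd_0[of y y] gd_edge[OF Esym[OF xy]] by auto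
    qed
    then show "aa p = 1" unfolding aa_def px by simp
  qed
next
  have xV: "x \<in> V" "y \<in> V" using EV xy by auto
  have LD: "\<forall>u\<in>V. \<forall>p\<in>V. laplacian V E (\<lambda>z. real (gdist V E z u)) p = real (Deg V E u) - K * real (gdist V E p u)"
    using sharp[OF K] by blast
  case (Suc k)
  show ?case
  proof (intro ballI impI)
    fix p assume p: "p \<in> V" "gdist V E p x = Suc k" "gdist V E p x < gdist V E p y"
    obtain q where q: "E p q" "gdist V E q x = k" using gd_pred p xV by blast
    have qV: "q \<in> V" using EV q by auto
    have py: "gdist V E p y = Suc (Suc k)" using xy_lip[OF xy p(1)] p by auto
    have qy: "gdist V E q y = Suc k" using xy_lip[OF xy qV] gd_lip[OF q(1) xV(2)] q(2) py by auto
    have IH: "aa q = 1" using Suc qV q(2) qy by auto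
    have d1: "laplacian V E (\<lambda>z. real (min (gdist V E z x) (gdist V E z y))) q
       - laplacian V E (\<lambda>z. real (min (gdist V E z x) (gdist V E z y))) p \<ge> K"
      unfolding K(1) by (rule curv_edge[OF Esym[OF q(1)] min_lip]) (use p q py qy in simp)
    have d2: "laplacian V E (\<lambda>z. real (max (gdist V E z x) (gdist V E z y))) q
       - laplacian V E (\<lambda>z. real (max (gdist V E z x) (gdist V E z y))) p \<ge> K"
      unfolding K(1) by (rule curv_edge[OF Esym[OF q(1)] max_lip]) (use p q py qy in simp)
    have qxy: "gdist V E q x < gdist V E q y" using q qy by simp
    note e1 = lap_delta[OF p(1) p(3)] lap_delta[OF qV qxy] lap_psi[OF p(1) p(3)] lap_psi[OF qV qxy]
    have e2: "laplacian V E (\<lambda>z. real (gdist V E z x)) p = real (Deg V E x) - K * real (Suc k)"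
      "laplacian V E (\<lambda>z. real (gdist V E z x)) q = real (Deg V E x) - K * real k"
      "laplacian V E (\<lambda>z. real (gdist V E z y)) p = real (Deg V E y) - K * real (Suc (Suc k))"
      "laplacian V E (\<lambda>z. real (gdist V E z y)) q = real (Deg V E y) - K * real (Suc k)"
      using LD xV p qV q(2) py qy by auto
    have "real (aa p) = real (aa q)" using d1 d2 unfolding e1 e2 by (simp add: algebra_simps)
    then show "aa p = 1" using IH by simp
  qed
qed

end
end

theorem lemma3p4:
  fixes V :: "'a set" and E :: "'a \<Rightarrow> 'a \<Rightarrow> bool" and K :: real and x y :: 'a
  assumes "simple_graph V E"
    and "connected_graph V E"
    and "K = min_curv V E"
    and "K > 0"
    and "diam_eff V E = real (Max (Deg V E ` V)) / K"
    and "E x y"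
  shows "\<forall>x' \<in> {v \<in> V. gdist V E v x < gdist V E v y}.
           card {w \<in> V. E x' w \<and> gdist V E w y < gdist V E w x} = 1 \<and>
           real (card {w \<in> V. E x' w \<and> gdist V E w x = gdist V E w y}) = K - 2"
proof -
  interpret G V E using assms(1,2) by unfold_locales
  have xV: "x \<in> V" "y \<in> V" using EV assms(6) by auto
  have LD: "\<forall>u\<in>V. \<forall>p\<in>V. laplacian V E (\<lambda>z. real (gdist V E z u)) p = real (Deg V E u) - K * real (gdist V E p u)"
    and reg: "\<forall>u\<in>V. Deg V E u = Max (Deg V E ` V)"
    using sharp[OF assms(3-5)] by blast+
  show ?thesis
  proof (intro ballI conjI)
    fix x' assume "x' \<in> {v \<in> V. gdist V E v x < gdist V E v y}"
    then have p: "x' \<in> V" "gdist V E x' x < gdist V E x' y" by auto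
    have a1: "aa x y x' = 1" using aa_one[OF assms(6) assms(3-5)] p by blast
    then show "card {w \<in> V. E x' w \<and> gdist V E w y < gdist V E w x} = 1"
      unfolding aa_def[OF assms(6)] .
    have py: "gdist V E x' y = Suc (gdist V E x' x)" using xy_lip[OF assms(6) p(1)] p by auto
    have "- (2 * real (aa x y x') + real (bb x y x'))
        = laplacian V E (\<lambda>z. real (gdist V E z y)) x' - laplacian V E (\<lambda>z. real (gdist V E z x)) x'"
      using lap_g[OF assms(6) p] lap_diff by simp
    also have "\<dots> = - K"
    proof -
      have "laplacian V E (\<lambda>z. real (gdist V E z y)) x' = real (Deg V E y) - K * real (gdist V E x' y)"
        using LD xV(2) p(1) by blast
      moreover have "laplacian V E (\<lambda>z. real (gdist V E z x)) x' = real (Deg V E x) - K * real (gdist V E x' x)"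
        using LD xV(1) p(1) by blast
      moreover have "Deg V E x = Deg V E y" using reg xV by simp
      ultimately show ?thesis using py by (simp add: algebra_simps)
    qed
    finally show "real (card {w \<in> V. E x' w \<and> gdist V E w x = gdist V E w y}) = K - 2"
      using a1 unfolding bb_def[OF assms(6)] by simp
  qed
qed

end
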